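(* For real $c>4$, \[ Z(s,x+x^{-1}+y+y^{-1}+c) = c^s \sum_{j=0}^\infty \binom{s}{2j} \frac{1}{c^{2j}} \binom{2j}{j}^2 = c^s\, {}_3F_2\left(\left.\begin{array}{c} -\frac{s}{2}, \frac{1-s}{2}, \frac12 \\ 1,1 \end{array}\right| \frac{16}{c^2}\right). \]
   Context: For a nonzero Laurent polynomial $P\in\mathbb{C}[x_1^{\pm1},\dots,x_n^{\pm1}]$, the zeta Mahler measure is $Z(s,P)=\int_0^1\cdots\int_0^1 \left|P(\mathrm{e}^{2\pi i\theta_1},\dots,\mathrm{e}^{2\pi i\theta_n})\right|^s \,\mathrm{d}\theta_1\cdots\mathrm{d}\theta_n$. The generalized hypergeometric series is ${}_3F_2\left(\left.\begin{array}{c} a_1,a_2,a_3 \\ b_1,b_2 \end{array}\right| z\right)=\sum_{j=0}^\infty \frac{(a_1)_j(a_2)_j(a_3)_j}{(b_1)_j(b_2)_j\, j!}z^j$, with Pochhammer symbol $(a)_j=a(a+1)\cdots(a+j-1)$. *)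

theory Defs
  imports "HOL-Analysis.Analysis"
begin

definition zeta_mahler2 :: "complex \<Rightarrow> (complex \<Rightarrow> complex \<Rightarrow> complex) \<Rightarrow> complex" where
  "zeta_mahler2 s P =
     (LINT t : {0..1::real} \<times> {0..1::real} | lborel.
        complex_of_real (cmod (P (cis (2 * pi * fst t)) (cis (2 * pi * snd t)))) powr s)"

definition hyp3F2 :: "complex \<Rightarrow> complex \<Rightarrow> complex \<Rightarrow> complex \<Rightarrow> complex \<Rightarrow> complex \<Rightarrow> complex" where
  "hyp3F2 a1 a2 a3 b1 b2 z =
     (\<Sum>j. pochhammer a1 j * pochhammer a2 j * pochhammer a3 j
           / (pochhammer b1 j * pochhammer b2 j * of_nat (fact j)) * z ^ j)"

end

theory Submission
  imports Defs
begin

lemma cis_int_integral: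
  fixes k :: int
  shows "((\<lambda>x. cis (2 * pi * of_int k * x)) has_integral (if k = 0 then 1 else 0)) {0..1}"
proof (cases "k = 0")
  case True
  then show ?thesis using has_integral_const_real[of "1::complex" 0 1] by simp
next
  case False
  define w where "w = \<i> * complex_of_real (2 * pi * of_int k)"
  have w0: "w \<noteq> 0" using False by (simp add: w_def)
  let ?G = "\<lambda>z::complex. exp (w * z) / w"
  have cw: "cis (2 * pi * of_int k * x) = exp (w * of_real x)" for x
    by (simp add: cis_conv_exp w_def mult_ac)
  have "((\<lambda>x. ?G (of_real x)) has_vector_derivative exp (w * of_real x)) (at x within {0..1})" for x
    apply (rule has_vector_derivative_real_field)
    apply (rule derivative_eq_intros refl)+
    using w0 by (simp_all add: field_simps)
  then have "((\<lambda>x. exp (w * of_real x)) has_integral (?G (of_real 1) - ?G (of_real 0))) {0..1}"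
    by (intro fundamental_theorem_of_calculus) auto
  moreover have "exp w = 1"
  proof -
    have "exp w = cis (2 * pi * of_int k)" by (simp add: w_def cis_conv_exp)
    also have "\<dots> = 1" by (rule cis_multiple_2pi) simp
    finally show ?thesis .
  qed
  ultimately show ?thesis using False by (simp add: cw)
qed

lemma cos_pow_expand:
  "(complex_of_real (2 * cos (2 * pi * x))) ^ m
     = (\<Sum>l\<le>m. of_nat (m choose l) * cis (2 * pi * of_int (int (2*l) - int m) * x))"
proof -
  have e: "complex_of_real (2 * cos (2 * pi * x)) = cis (2*pi*x) + cis (- (2*pi*x))"
    by (simp add: complex_eq_iff)
  have "(cis (2*pi*x) + cis (- (2*pi*x))) ^ m
      = (\<Sum>l\<le>m. of_nat (m choose l) * cis (2*pi*x) ^ l * cis (- (2*pi*x)) ^ (m - l))"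
    by (rule binomial_ring)
  also have "\<dots> = (\<Sum>l\<le>m. of_nat (m choose l) * cis (2 * pi * of_int (int (2*l) - int m) * x))"
  proof (rule sum.cong[OF refl])
    fix l assume "l \<in> {..m}"
    then have lm: "l \<le> m" by simp
    have "cis (2*pi*x) ^ l * cis (- (2*pi*x)) ^ (m - l) = cis (real l * (2*pi*x) + real (m-l) * (- (2*pi*x)))"
      by (simp only: Complex.DeMoivre cis_mult)
    also have "real l * (2*pi*x) + real (m-l) * (- (2*pi*x)) = 2 * pi * of_int (int (2*l) - int m) * x"
      using lm by (simp add: of_nat_diff algebra_simps)
    finally show "of_nat (m choose l) * cis (2*pi*x) ^ l * cis (- (2*pi*x)) ^ (m - l)
        = of_nat (m choose l) * cis (2 * pi * of_int (int (2*l) - int m) * x)" by simp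
  qed
  finally show ?thesis using e by simp
qed

lemma K_integral:
  "((\<lambda>x. (complex_of_real (2 * cos (2 * pi * x))) ^ m) has_integral
      (if even m then of_nat (m choose (m div 2)) else 0)) {0..1}"
proof -
  have "((\<lambda>x. \<Sum>l\<le>m. of_nat (m choose l) * cis (2 * pi * of_int (int (2*l) - int m) * x)) has_integral
      (\<Sum>l\<le>m. of_nat (m choose l) * (if int (2*l) - int m = 0 then 1 else 0))) {0..1}"
    by (intro has_integral_sum has_integral_mult_right cis_int_integral) auto
  moreover have "(\<Sum>l\<le>m. of_nat (m choose l) * (if int (2*l) - int m = 0 then 1 else 0) :: complex)
      = (if even m then of_nat (m choose (m div 2)) else 0)"
  proof (cases "even m")
    case True
    have "(\<Sum>l\<le>m. of_nat (m choose l) * (if int (2*l) - int m = 0 then 1 else 0) :: complex)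
        = (\<Sum>l\<le>m. if l = m div 2 then of_nat (m choose l) else 0)"
      using True by (intro sum.cong) auto
    also have "\<dots> = of_nat (m choose (m div 2))" by (simp add: sum.delta')
    finally show ?thesis using True by simp
  next
    case False
    then have "\<And>l. int (2*l) - int m \<noteq> 0" by presburger
    then show ?thesis using False by simp
  qed
  ultimately show ?thesis by (simp only: cos_pow_expand)
qed

definition Kv :: "nat \<Rightarrow> nat" where "Kv m = (if even m then m choose (m div 2) else 0)"

lemma choose_ident:
  assumes "i \<le> j"
  shows "(2*j choose 2*i) * (2*i choose i) * (2*j - 2*i choose (j - i)) = (2*j choose j) * (j choose i)^2"
proof -
  have "real ((2*j choose 2*i) * (2*i choose i) * (2*j - 2*i choose (j - i))) = real ((2*j choose j) * (j choose i)^2)"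
  proof -
    have e: "2*j - 2*i = 2*(j-i)" by simp
    have a: "real (2*j choose 2*i) = fact (2*j) / (fact (2*i) * fact (2*(j-i)))"
      using assms by (subst binomial_fact) (auto simp: e)
    have b: "real (2*i choose i) = fact (2*i) / (fact i * fact i)"
      by (subst binomial_fact) (auto simp: mult_2)
    have c: "real (2*(j-i) choose (j-i)) = fact (2*(j-i)) / (fact (j-i) * fact (j-i))"
      by (subst binomial_fact) (auto simp: mult_2)
    have d: "real (2*j choose j) = fact (2*j) / (fact j * fact j)"
      by (subst binomial_fact) (auto simp: mult_2)
    have f: "real (j choose i) = fact j / (fact i * fact (j-i))"
      using assms by (subst binomial_fact) auto
    show ?thesis unfolding of_nat_mult of_nat_power e a b c d f
      by (simp add: field_simps power2_eq_square)
  qed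
  then show ?thesis by (simp only: of_nat_eq_iff)
qed

lemma Kv_sum: "(\<Sum>m\<le>n. (n choose m) * Kv m * Kv (n - m)) = (if even n then (n choose (n div 2))^2 else 0)"
proof (cases "even n")
  case False
  have "\<And>m. m \<le> n \<Longrightarrow> Kv m * Kv (n - m) = 0"
    using False unfolding Kv_def by auto
  then show ?thesis using False by simp
next
  case True
  then obtain j where n: "n = 2*j" by auto
  let ?h = "\<lambda>m. (n choose m) * Kv m * Kv (n - m)"
  have "(\<Sum>m\<le>n. ?h m) = (\<Sum>m\<in>(\<lambda>i. 2*i) ` {..j}. ?h m)"
    by (rule sum.mono_neutral_right) (auto simp: n Kv_def)
  also have "\<dots> = (\<Sum>i\<le>j. ?h (2*i))"
    by (subst sum.reindex) (auto simp: inj_on_def)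
  also have "\<dots> = (\<Sum>i\<le>j. (2*j choose j) * (j choose i)^2)"
  proof (rule sum.cong[OF refl])
    fix i assume "i \<in> {..j}"
    then have ij: "i \<le> j" by simp
    have "n - 2*i = 2*(j-i)" using n by simp
    then show "?h (2*i) = (2*j choose j) * (j choose i)^2"
      using choose_ident[OF ij] n by (simp add: Kv_def)
  qed
  also have "\<dots> = (2*j choose j) * (2*j choose j)"
    by (simp add: sum_distrib_left[symmetric] choose_square_sum)
  finally show ?thesis using n by (simp add: power2_eq_square)
qed

lemma K_integral': "((\<lambda>x. (complex_of_real (2 * cos (2 * pi * x))) ^ m) has_integral of_nat (Kv m)) {0..1}"
  using K_integral[of m] by (cases "even m") (simp_all add: Kv_def)

lemma S_eq: "{0..1::real} \<times> {0..1::real} = cbox (0,0) (1,1)"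
  by (simp add: cbox_Pair_eq)

lemma J_integral:
  fixes n :: nat
  defines "g \<equiv> \<lambda>t::real\<times>real. (complex_of_real (2 * cos (2 * pi * fst t) + 2 * cos (2 * pi * snd t)))^n"
  shows "set_integrable lborel ({0..1::real} \<times> {0..1::real}) g"
    "(LINT t : {0..1::real} \<times> {0..1::real} | lborel. g t) = of_nat (if even n then (n choose (n div 2))^2 else 0)"
proof -
  have cont: "continuous_on A g" for A unfolding g_def by (intro continuous_intros)
  show si: "set_integrable lborel ({0..1::real} \<times> {0..1::real}) g"
    unfolding set_integrable_def
    by (rule borel_integrable_compact) (auto intro: compact_Times cont)
  have "(LINT t : {0..1::real} \<times> {0..1::real} | lborel. g t) = integral ({0..1::real} \<times> {0..1::real}) g"
    by (rule set_borel_integral_eq_integral[OF si])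
  also have "\<dots> = integral {0..1} (\<lambda>x. integral {0..1} (\<lambda>y. g (x, y)))"
    using integral_prod_continuous[OF cont, of "0::real" "0::real" "1::real" "1::real"] by (simp add: S_eq)
  also have "\<dots> = integral {0..1} (\<lambda>x. \<Sum>m\<le>n. of_nat (n choose m) * (complex_of_real (2 * cos (2 * pi * x))) ^ m * of_nat (Kv (n-m)))"
  proof (rule integral_cong)
    fix x :: real
    let ?A = "\<lambda>x::real. complex_of_real (2 * cos (2 * pi * x))"
    have "g (x,y) = (\<Sum>m\<le>n. of_nat (n choose m) * ?A x ^ m * ?A y ^ (n-m))" for y
      unfolding g_def by (simp only: fst_conv snd_conv of_real_add binomial_ring)
    moreover have "((\<lambda>y. \<Sum>m\<le>n. of_nat (n choose m) * ?A x ^ m * ?A y ^ (n-m)) has_integral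
        (\<Sum>m\<le>n. of_nat (n choose m) * ?A x ^ m * of_nat (Kv (n-m)))) {0..1}"
      by (intro has_integral_sum has_integral_mult_right K_integral') auto
    ultimately show "integral {0..1} (\<lambda>y. g (x, y)) = (\<Sum>m\<le>n. of_nat (n choose m) * ?A x ^ m * of_nat (Kv (n-m)))"
      by (simp add: integral_unique)
  qed
  also have "\<dots> = (\<Sum>m\<le>n. of_nat (n choose m) * of_nat (Kv m) * of_nat (Kv (n-m)))"
  proof (rule integral_unique)
    show "((\<lambda>x. \<Sum>m\<le>n. of_nat (n choose m) * (complex_of_real (2 * cos (2 * pi * x))) ^ m * of_nat (Kv (n-m))) has_integral
       (\<Sum>m\<le>n. of_nat (n choose m) * of_nat (Kv m) * of_nat (Kv (n-m)))) {0..1}"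
      by (intro has_integral_sum has_integral_mult_right has_integral_mult_left K_integral') auto
  qed
  also have "\<dots> = of_nat (\<Sum>m\<le>n. (n choose m) * Kv m * Kv (n - m))"
    by simp
  finally show "(LINT t : {0..1::real} \<times> {0..1::real} | lborel. g t) = of_nat (if even n then (n choose (n div 2))^2 else 0)"
    by (simp only: Kv_sum)
qed

lemma term_eq:
  fixes c :: real and s :: complex
  assumes "c \<noteq> 0"
  shows "(s gchoose (2*j)) * (1 / complex_of_real c ^ (2*j)) * of_nat ((2*j choose j)^2)
    = pochhammer (- s / 2) j * pochhammer ((1 - s) / 2) j * pochhammer (1/2) j
           / (pochhammer 1 j * pochhammer 1 j * of_nat (fact j)) * (complex_of_real (16 / c^2)) ^ j"
proof -
  have p1: "pochhammer (- s) (2*j) = of_nat (2^(2*j)) * pochhammer (- s / 2) j * pochhammer ((1 - s) / 2) j"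
    using pochhammer_double[of "- s / 2" j] by (simp add: field_simps)
  have g: "s gchoose (2*j) = pochhammer (- s) (2*j) / fact (2*j)"
    by (simp add: gbinomial_pochhammer)
  have fd: "(fact (2*j) :: complex) = 2 ^ (2*j) * pochhammer (1/2) j * fact j"
    by (rule fact_double)
  have bc: "(of_nat ((2*j choose j)^2) :: complex) = (fact (2*j) / (fact j * fact j))^2"
    unfolding of_nat_power by (subst binomial_fact) (auto simp: mult_2)
  have p1f: "pochhammer (1::complex) j = fact j" by (simp add: pochhammer_fact)
  have c16: "complex_of_real (16 / c^2) ^ j = 4^j * 4^j / complex_of_real c ^ (2*j)"
  proof -
    have "complex_of_real (16 / c^2) ^ j = (16 / (of_real c)^2) ^ j" by simp
    also have "\<dots> = 16^j / of_real c ^ (2*j)" by (simp add: power_divide power_mult)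
    also have "(16::complex)^j = 4^j * 4^j" by (simp flip: power_mult_distrib)
    finally show ?thesis .
  qed
  have f4: "(2::complex) ^ (2*j) = 4^j" by (simp add: power_mult)
  have f4': "(of_nat (2 ^ (2*j)) :: complex) = 4^j" by (simp add: power_mult)
  have fd2: "(fact (j*2)::complex) = fact j * (4 ^ j * pochhammer (1 / 2) j)"
    using fd f4 by (simp add: mult.commute mult.left_commute)
  show ?thesis
    unfolding g p1 bc p1f c16 f4'
    apply (subst (2) fd) unfolding f4
    using assms by (simp add: field_simps power2_eq_square fd2)
qed

lemma cis_inv_sum: "cis a + inverse (cis a) = complex_of_real (2 * cos a)"
  by (simp add: complex_eq_iff cis.sel)

theorem theorem14:
  fixes c :: real and s :: complex
  assumes "c > 4"
  shows "summable (\<lambda>j. (s gchoose (2*j)) * (1 / complex_of_real c ^ (2*j)) * of_nat ((2*j choose j)^2))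
    \<and> zeta_mahler2 s (\<lambda>x y. x + inverse x + y + inverse y + complex_of_real c)
        = complex_of_real c powr s *
          (\<Sum>j. (s gchoose (2*j)) * (1 / complex_of_real c ^ (2*j)) * of_nat ((2*j choose j)^2))
    \<and> complex_of_real c powr s *
          (\<Sum>j. (s gchoose (2*j)) * (1 / complex_of_real c ^ (2*j)) * of_nat ((2*j choose j)^2))
        = complex_of_real c powr s * hyp3F2 (- s / 2) ((1 - s) / 2) (1/2) 1 1 (complex_of_real (16 / c^2))"
proof -
  have c0: "c > 0" using assms by simp
  define U where "U = (\<lambda>t::real\<times>real. 2 * cos (2 * pi * fst t) + 2 * cos (2 * pi * snd t))"
  define S where "S = {0..1::real} \<times> {0..1::real}"
  define C where "C = complex_of_real c powr s"
  define f where "f = (\<lambda>n t. indicator S t *\<^sub>R (C * ((s gchoose n) * (of_real (U t) / of_real c)^n)))"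
  define B where "B = (\<lambda>n. norm C * (norm (s gchoose n) * (4/c)^n))"
  define T where "T = (\<lambda>j. (s gchoose (2*j)) * (1 / complex_of_real c ^ (2*j)) * of_nat ((2*j choose j)^2))"
  define F where "F = (\<lambda>t. indicator S t *\<^sub>R (complex_of_real (cmod ((\<lambda>x y. x + inverse x + y + inverse y + complex_of_real c) (cis (2 * pi * fst t)) (cis (2 * pi * snd t)))) powr s))"
  have C0: "C \<noteq> 0" using c0 by (simp add: C_def)
  have Ub: "\<bar>U t\<bar> \<le> 4" for t
  proof -
    have "\<bar>cos (2 * pi * fst t)\<bar> \<le> 1" "\<bar>cos (2 * pi * snd t)\<bar> \<le> 1" by (rule abs_cos_le_one)+
    then show ?thesis unfolding U_def by linarith
  qed
  have sumB: "summable B"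
  proof -
    define r where "r = (1 + 4/c) / 2"
    have r1: "4/c < r" "r < 1" using assms by (simp_all add: r_def field_simps)
    have "(\<lambda>n. (s gchoose n) * (complex_of_real r)^n) sums (1 + complex_of_real r) powr s"
      by (rule gen_binomial_complex) (use r1 c0 in \<open>simp only: norm_of_real, simp add: r_def\<close>)
    then have "summable (\<lambda>n. norm ((s gchoose n) * (complex_of_real (4/c))^n))"
      by (intro powser_insidea[of _ "complex_of_real r"]) (use r1 c0 in \<open>auto simp: sums_iff simp del: of_real_divide\<close>)
    then have "summable (\<lambda>n. norm (s gchoose n) * (4/c)^n)"
      using c0 by (simp add: norm_mult norm_power norm_divide)
    then show ?thesis unfolding B_def by (rule summable_mult)
  qed
  have ptw: "(\<lambda>n. f n t) sums F t" for t
  proof -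
    define z where "z = complex_of_real (U t / c)"
    have nz: "norm z < 1"
    proof -
      have "norm z = \<bar>U t\<bar> / c" using c0 by (simp add: z_def norm_divide)
      also have "\<dots> < 1" using Ub[of t] assms by (simp add: field_simps)
      finally show ?thesis .
    qed
    have g: "(\<lambda>n. C * ((s gchoose n) * z^n)) sums (C * (1 + z) powr s)"
      by (rule sums_mult) (rule gen_binomial_complex[OF nz])
    have pos: "0 \<le> 1 + U t / c" using Ub[of t] assms by (simp add: field_simps abs_le_iff)
    have e1: "(\<lambda>x y. x + inverse x + y + inverse y + complex_of_real c) (cis (2 * pi * fst t)) (cis (2 * pi * snd t))
        = complex_of_real (c + U t)"
      unfolding U_def using cis_inv_sum[of "2 * pi * fst t"] cis_inv_sum[of "2 * pi * snd t"]
      by (simp add: algebra_simps)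
    have cU: "c + U t \<ge> 0" using Ub[of t] assms by (simp add: abs_le_iff)
    have e2: "complex_of_real (c + U t) = complex_of_real c * (1 + z)"
      using c0 by (simp add: z_def field_simps)
    have e3: "complex_of_real (cmod ((\<lambda>x y. x + inverse x + y + inverse y + complex_of_real c) (cis (2 * pi * fst t)) (cis (2 * pi * snd t)))) powr s
        = C * (1 + z) powr s"
      unfolding e1 norm_of_real using cU e2 c0 pos
      by (simp add: C_def z_def powr_times_real)
    show ?thesis
    proof (cases "t \<in> S")
      case True
      then show ?thesis using g unfolding f_def F_def e3 by (simp add: z_def)
    next
      case False
      then show ?thesis unfolding f_def F_def by simp
    qed
  qed
  have cS: "compact S" unfolding S_def by (intro compact_Times compact_Icc)
  have intf: "integrable lborel (f n)" for n
    unfolding f_def by (rule borel_integrable_compact[OF cS]) (use c0 in \<open>auto simp: U_def intro!: continuous_intros\<close>)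
  have B0: "B n \<ge> 0" for n using c0 unfolding B_def by simp
  have nb: "norm (f n t) \<le> indicator S t * B n" for n t
  proof (cases "t \<in> S")
    case True
    have "\<bar>U t\<bar> / c \<le> 4 / c" using Ub[of t] c0 by (simp add: divide_right_mono)
    then have "(\<bar>U t\<bar> / c)^n \<le> (4 / c)^n" by (rule power_mono) (use c0 in simp)
    then have "norm C * (norm (s gchoose n) * (\<bar>U t\<bar> / c)^n) \<le> norm C * (norm (s gchoose n) * (4 / c)^n)"
      by (intro mult_left_mono) auto
    then show ?thesis using True c0 unfolding f_def B_def
      by (simp add: norm_mult norm_power norm_divide)
  next
    case False
    then show ?thesis unfolding f_def by simp
  qed
  have intB: "integrable lborel (\<lambda>t. indicator S t * B n)" for n
    using borel_integrable_compact[OF cS, of "\<lambda>t. B n"] by simp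
  have sums: "(\<lambda>n. integral\<^sup>L lborel (f n)) sums integral\<^sup>L lborel (\<lambda>t. \<Sum>n. f n t)"
  proof (rule sums_integral)
    show "integrable lborel (f i)" for i by (rule intf)
    show "AE x in lborel. summable (\<lambda>i. norm (f i x))"
    proof (rule AE_I2)
      fix x
      show "summable (\<lambda>i. norm (f i x))"
      proof (rule summable_comparison_test'[OF sumB])
        fix n
        have "indicator S x * B n \<le> B n" using B0[of n] by (simp add: indicator_def)
        then show "norm (norm (f n x)) \<le> B n" using nb[of n x] by simp
      qed
    qed
    show "summable (\<lambda>i. \<integral>x. norm (f i x) \<partial>lborel)"
    proof (rule summable_comparison_test'[OF summable_mult2[OF sumB]])
      fix n
      have "(\<integral>x. norm (f n x) \<partial>lborel) \<le> (\<integral>x. indicator S x * B n \<partial>lborel)"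
        by (rule integral_mono) (use intf intB nb in auto)
      also have "\<dots> = B n * (\<integral>x. indicator S x \<partial>lborel)"
        by (simp add: mult.commute)
      finally show "norm (\<integral>x. norm (f n x) \<partial>lborel) \<le> B n * (\<integral>x. indicator S x \<partial>lborel)"
        by simp
    qed
  qed
  have zeta: "integral\<^sup>L lborel (\<lambda>t. \<Sum>n. f n t) = zeta_mahler2 s (\<lambda>x y. x + inverse x + y + inverse y + complex_of_real c)"
  proof -
    have "(\<lambda>t. \<Sum>n. f n t) = F"
      by (rule ext) (rule sums_unique[OF ptw, symmetric])
    then show ?thesis by (simp add: zeta_mahler2_def set_lebesgue_integral_def F_def S_def)
  qed
  have intfn: "integral\<^sup>L lborel (f n) = C * ((s gchoose n) * (1 / complex_of_real c ^ n) * of_nat (if even n then (n choose (n div 2))^2 else 0))" for n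
  proof -
    have fe: "f n = (\<lambda>t. (C * (s gchoose n) * (1 / complex_of_real c ^ n)) * (indicator S t *\<^sub>R (complex_of_real (U t))^n))"
      by (auto simp: f_def fun_eq_iff power_divide split: split_indicator)
    have J: "integral\<^sup>L lborel (\<lambda>t. indicator S t *\<^sub>R (complex_of_real (U t))^n) = of_nat (if even n then (n choose (n div 2))^2 else 0)"
      using J_integral(2)[of n] unfolding set_lebesgue_integral_def U_def S_def .
    show ?thesis unfolding fe integral_mult_right_zero J by (simp add: mult.assoc)
  qed
  define a where "a = (\<lambda>n. (s gchoose n) * (1 / complex_of_real c ^ n) * of_nat (if even n then (n choose (n div 2))^2 else 0))"
  have "(\<lambda>n. C * a n) sums zeta_mahler2 s (\<lambda>x y. x + inverse x + y + inverse y + complex_of_real c)"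
    using sums unfolding zeta intfn a_def .
  then have "a sums (zeta_mahler2 s (\<lambda>x y. x + inverse x + y + inverse y + complex_of_real c) / C)"
    using C0 by (rule sums_mult_D)
  moreover have "strict_mono (\<lambda>j::nat. 2*j)" by (auto simp: strict_mono_def)
  moreover have "a n = 0" if "n \<notin> range (\<lambda>j::nat. 2*j)" for n
  proof -
    have "odd n" using that by (auto elim!: evenE)
    then show ?thesis by (simp add: a_def)
  qed
  ultimately have Tsums: "T sums (zeta_mahler2 s (\<lambda>x y. x + inverse x + y + inverse y + complex_of_real c) / C)"
    using sums_mono_reindex[of "\<lambda>j::nat. 2*j" a] by (simp add: a_def T_def)
  have h3: "hyp3F2 (- s / 2) ((1 - s) / 2) (1/2) 1 1 (complex_of_real (16 / c^2)) = suminf T"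
    unfolding hyp3F2_def T_def
    by (rule suminf_cong, rule term_eq[symmetric]) (use c0 in simp)
  show ?thesis
    using Tsums C0 h3 unfolding T_def C_def[symmetric] by (auto simp: sums_iff)
qed

end
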